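(* Let $\mathfrak{H}$ be a Euclidean space and let $(\mathcal{X},\mathsf{S},\gamma,(\Lambda_{a})_{a\in\mathcal{A}})$ be a spectral decomposition system for $\mathfrak{H}$ such that the set $\{\Lambda_a\}_{a\in\mathcal{A}}$ is closed in $\mathscr{L}(\mathcal{X},\mathfrak{H})$. Let $D$ be a nonempty $\mathsf{S}$-invariant subset of $\mathcal{X}$, let $x,y\in\mathcal{X}$, and let $a\in\mathcal{A}$. Then $y\in N_{\mathsf{F}}(x;D)$ if and only if $\Lambda_a y\in N_{\mathsf{F}}(\Lambda_a x;\gamma^{-1}(D))$.
   Context: A Euclidean space is a finite-dimensional real Hilbert space; $\mathscr{L}(\mathcal{X},\mathfrak{H})$ carries the operator-norm topology. A spectral decomposition system for a Euclidean space $\mathfrak{H}$ is a tuple $(\mathcal{X},\mathsf{S},\gamma,(\Lambda_a)_{a\in\mathcal{A}})$ where $\mathcal{X}$ is a Euclidean space, $\mathsf{S}$ is a group acting on $\mathcal{X}$ such that each map $x\mapsto \mathsf{s}\cdot x$ is a linear isometry, $\gamma\colon\mathfrak{H}\to\mathcal{X}$ is a mapping, and each $\Lambda_a\colon\mathcal{X}\to\mathfrak{H}$ is a linear isometry, such that: [A] there exists a mapping $\tau\colon\mathcal{X}\to\mathcal{X}$ with $\tau(\mathsf{s}\cdot x)=\tau(x)$ for all $\mathsf{s},x$, $\tau(x)\in\mathsf{S}\cdot x$ for all $x$, and $\gamma\circ\Lambda_a=\tau$ for all $a\in\mathcal{A}$; [B] for every $X\in\mathfrak{H}$ there exists $a\in\mathcal{A}$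 with $X=\Lambda_a\gamma(X)$; [C] $\langle X,Y\rangle\le\langle\gamma(X),\gamma(Y)\rangle$ for all $X,Y\in\mathfrak{H}$. A set $D\subset\mathcal{X}$ is $\mathsf{S}$-invariant if $\mathsf{s}\cdot x\in D$ for all $x\in D$, $\mathsf{s}\in\mathsf{S}$. For a nonempty subset $C$ of a Euclidean space $\mathcal{H}$, the Fréchet normal cone is $N_{\mathsf{F}}(x;C)=\{y\in\mathcal{H}:\limsup_{z\to x,\,z\in C\setminus\{x\}}\langle z-x,y\rangle/\|z-x\|\le 0\}$ if $x\in C$ and $N_{\mathsf{F}}(x;C)=\varnothing$ if $x\notin C$. *)

theory Defs
  imports "HOL-Analysis.Analysis" "HOL-Algebra.Group_Action"
begin

definition linear_isometry :: "('a::real_normed_vector \<Rightarrow> 'b::real_normed_vector) \<Rightarrow> bool" where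
  "linear_isometry f \<longleftrightarrow> linear f \<and> (\<forall>x. norm (f x) = norm x)"

text \<open>Spectral decomposition system (X, S, gamma, (Lambda_a)_a) for the Euclidean space H.
  The group S is a HOL-Algebra group G acting on X (all of the type 'x) via phi;
  the index set A is the type 'a.\<close>
definition spectral_decomposition_system ::
  "('g, 'm) monoid_scheme \<Rightarrow> ('g \<Rightarrow> 'x::euclidean_space \<Rightarrow> 'x) \<Rightarrow> ('h::euclidean_space \<Rightarrow> 'x)
     \<Rightarrow> ('a \<Rightarrow> 'x \<Rightarrow> 'h) \<Rightarrow> bool" where
  "spectral_decomposition_system G \<phi> \<gamma> \<Lambda> \<longleftrightarrow>
     group G \<and> group_action G UNIV \<phi> \<and>
     (\<forall>s\<in>carrier G. linear_isometry (\<phi> s)) \<and>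
     (\<forall>a. linear_isometry (\<Lambda> a)) \<and>
     (\<exists>\<tau>. (\<forall>s\<in>carrier G. \<forall>x. \<tau> (\<phi> s x) = \<tau> x) \<and>
          (\<forall>x. \<tau> x \<in> orbit G \<phi> x) \<and>
          (\<forall>a. \<gamma> \<circ> \<Lambda> a = \<tau>)) \<and>
     (\<forall>X. \<exists>a. X = \<Lambda> a (\<gamma> X)) \<and>
     (\<forall>X Y. inner X Y \<le> inner (\<gamma> X) (\<gamma> Y))"

definition S_invariant :: "('g, 'm) monoid_scheme \<Rightarrow> ('g \<Rightarrow> 'x \<Rightarrow> 'x) \<Rightarrow> 'x set \<Rightarrow> bool" where
  "S_invariant G \<phi> D \<longleftrightarrow> (\<forall>x\<in>D. \<forall>s\<in>carrier G. \<phi> s x \<in> D)"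

text \<open>Frechet normal cone; the limsup over an empty neighbourhood set is -infinity.\<close>
definition frechet_normal_cone :: "'a::real_inner \<Rightarrow> 'a set \<Rightarrow> 'a set" where
  "frechet_normal_cone x C =
     (if x \<in> C then
        {y. Limsup (at x within (C - {x})) (\<lambda>z. ereal (inner (z - x) y / norm (z - x))) \<le> 0}
      else {})"

end

theory Submission
  imports Defs
begin

lemma li_inner:
  assumes "linear_isometry f"
  shows "inner (f u) (f v) = inner u v"
proof -
  have l: "linear f" and n: "\<And>x. norm (f x) = norm x" using assms unfolding linear_isometry_def by auto
  have e: "f u + f v = f (u + v)" using l by (simp add: linear_add)
  have "inner (f u) (f v) = ((norm (f u + f v))\<^sup>2 - (norm (f u))\<^sup>2 - (norm (f v))\<^sup>2) / 2"
    by (rule dot_norm)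
  also have "\<dots> = ((norm (u + v))\<^sup>2 - (norm u)\<^sup>2 - (norm v)\<^sup>2) / 2"
    by (simp only: e n)
  also have "\<dots> = inner u v" by (rule dot_norm[symmetric])
  finally show ?thesis .
qed

lemma li_norm: "linear_isometry f \<Longrightarrow> norm (f u) = norm u"
  unfolding linear_isometry_def by auto

lemma li_diff: "linear_isometry f \<Longrightarrow> f u - f v = f (u - v)"
  unfolding linear_isometry_def by (simp add: linear_diff)

lemma fnc_iff:
  fixes x y :: "'a::real_inner"
  assumes "x \<in> C"
  shows "y \<in> frechet_normal_cone x C \<longleftrightarrow>
    (\<forall>e>0. \<exists>d>0. \<forall>z\<in>C. z \<noteq> x \<longrightarrow> norm (z - x) < d \<longrightarrow> inner (z - x) y \<le> e * norm (z - x))"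
proof -
  let ?f = "\<lambda>z. ereal (inner (z - x) y / norm (z - x))"
  let ?F = "at x within (C - {x})"
  have ev: "eventually P ?F \<longleftrightarrow> (\<exists>d>0. \<forall>z\<in>C. z \<noteq> x \<longrightarrow> norm (z - x) < d \<longrightarrow> P z)" for P
    unfolding eventually_at by (auto simp: dist_norm)
  have q: "z \<noteq> x \<Longrightarrow> (inner (z - x) y / norm (z - x) \<le> e) = (inner (z - x) y \<le> e * norm (z - x))" for z e
    by (simp add: divide_le_eq mult.commute)
  show ?thesis
  proof
    assume "y \<in> frechet_normal_cone x C"
    then have L: "Limsup ?F ?f \<le> 0" using assms unfolding frechet_normal_cone_def by simp
    show "\<forall>e>0. \<exists>d>0. \<forall>z\<in>C. z \<noteq> x \<longrightarrow> norm (z - x) < d \<longrightarrow> inner (z - x) y \<le> e * norm (z - x)"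
    proof (intro allI impI)
      fix e :: real assume "e > 0"
      then have "eventually (\<lambda>z. ?f z < ereal e) ?F"
        using L by (intro Limsup_lessD) (simp add: le_less_trans)
      then have "\<exists>d>0. \<forall>z\<in>C. z \<noteq> x \<longrightarrow> norm (z - x) < d \<longrightarrow> ?f z < ereal e"
        using ev[of "\<lambda>z. ?f z < ereal e"] by simp
      then obtain d where d: "d > 0" "\<forall>z\<in>C. z \<noteq> x \<longrightarrow> norm (z - x) < d \<longrightarrow> ?f z < ereal e"
        by (elim exE conjE) simp
      have "\<forall>z\<in>C. z \<noteq> x \<longrightarrow> norm (z - x) < d \<longrightarrow> inner (z - x) y \<le> e * norm (z - x)"
      proof (intro ballI impI)
        fix z assume "z \<in> C" "z \<noteq> x" "norm (z - x) < d"
        then have "inner (z - x) y / norm (z - x) < e" using d by simp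
        then show "inner (z - x) y \<le> e * norm (z - x)" using q[OF \<open>z \<noteq> x\<close>, of e] by simp
      qed
      then show "\<exists>d>0. \<forall>z\<in>C. z \<noteq> x \<longrightarrow> norm (z - x) < d \<longrightarrow> inner (z - x) y \<le> e * norm (z - x)"
        using d(1) by blast
    qed
  next
    assume H: "\<forall>e>0. \<exists>d>0. \<forall>z\<in>C. z \<noteq> x \<longrightarrow> norm (z - x) < d \<longrightarrow> inner (z - x) y \<le> e * norm (z - x)"
    have LB: "\<And>e. e > 0 \<Longrightarrow> Limsup ?F ?f \<le> ereal e"
    proof -
      fix e :: real assume "e > 0"
      show "Limsup ?F ?f \<le> ereal e"
    proof (rule Limsup_bounded)
      obtain d where d: "d > 0" "\<forall>z\<in>C. z \<noteq> x \<longrightarrow> norm (z - x) < d \<longrightarrow> inner (z - x) y \<le> e * norm (z - x)"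
        using H \<open>e > 0\<close> by blast
      have "\<forall>z\<in>C. z \<noteq> x \<longrightarrow> norm (z - x) < d \<longrightarrow> ?f z \<le> ereal e"
      proof (intro ballI impI)
        fix z assume "z \<in> C" "z \<noteq> x" "norm (z - x) < d"
        then have "inner (z - x) y \<le> e * norm (z - x)" using d by blast
        then have "inner (z - x) y / norm (z - x) \<le> e" using q[OF \<open>z \<noteq> x\<close>, of e] by simp
        then show "?f z \<le> ereal e" by simp
      qed
      then show "eventually (\<lambda>z. ?f z \<le> ereal e) ?F"
        unfolding ev using d(1) by blast
    qed
    qed
    have "Limsup ?F ?f \<le> 0"
    proof (rule ereal_le_epsilon2)
      fix e :: real assume "0 < e"
      then show "Limsup ?F ?f \<le> 0 + ereal e" using LB by simp
    qed
    then show "y \<in> frechet_normal_cone x C" using assms unfolding frechet_normal_cone_def by simp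
  qed
qed

theorem proposition3p2:
  fixes G :: "('g, 'm) monoid_scheme"
    and \<phi> :: "'g \<Rightarrow> 'x::euclidean_space \<Rightarrow> 'x"
    and \<gamma> :: "'h::euclidean_space \<Rightarrow> 'x"
    and \<Lambda> :: "'a \<Rightarrow> 'x \<Rightarrow> 'h"
    and D :: "'x set" and x y :: 'x and a :: 'a
  assumes "spectral_decomposition_system G \<phi> \<gamma> \<Lambda>"
    and "closed (range (\<lambda>b. Blinfun (\<Lambda> b)))"
    and "D \<noteq> {}"
    and "S_invariant G \<phi> D"
  shows "y \<in> frechet_normal_cone x D \<longleftrightarrow>
         \<Lambda> a y \<in> frechet_normal_cone (\<Lambda> a x) (\<gamma> -` D)"
proof -
  note sds = assms(1)[unfolded spectral_decomposition_system_def]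
  have grp: "group G" and ga: "group_action G UNIV \<phi>"
    and isoP: "\<And>s. s \<in> carrier G \<Longrightarrow> linear_isometry (\<phi> s)"
    and isoL: "\<And>b. linear_isometry (\<Lambda> b)"
    and Bx: "\<And>X. \<exists>b. X = \<Lambda> b (\<gamma> X)"
    and Cx: "\<And>X Y. inner X Y \<le> inner (\<gamma> X) (\<gamma> Y)"
    using sds by auto
  obtain \<tau> where t2: "\<And>x. \<tau> x \<in> orbit G \<phi> x" and t3: "\<And>b. \<gamma> \<circ> \<Lambda> b = \<tau>"
    using sds by blast
  have gL: "\<gamma> (\<Lambda> a w) = \<tau> w" for w using t3[of a] by (metis comp_apply)
  have phinv: "\<phi> (inv\<^bsub>G\<^esub> s) (\<phi> s w) = w" if "s \<in> carrier G" for s w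
    using group_action.orbit_sym_aux[OF ga that] by simp
  have invc: "inv\<^bsub>G\<^esub> s \<in> carrier G" if "s \<in> carrier G" for s
    using group.inv_closed[OF grp that] .
  have orb: "\<exists>s\<in>carrier G. \<tau> w = \<phi> s w" for w
    using t2[of w] unfolding orbit_def by blast
  have inv: "\<phi> s u \<in> D" if "u \<in> D" "s \<in> carrier G" for s u
    using assms(4) that unfolding S_invariant_def by blast
  have memb: "x \<in> D \<longleftrightarrow> \<Lambda> a x \<in> \<gamma> -` D"
  proof -
    obtain s where s: "s \<in> carrier G" "\<tau> x = \<phi> s x" using orb by blast
    show ?thesis
    proof
      assume "x \<in> D" then show "\<Lambda> a x \<in> \<gamma> -` D" using gL s inv by simp
    next
      assume "\<Lambda> a x \<in> \<gamma> -` D"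
      then have "\<phi> s x \<in> D" using gL s by simp
      then have "\<phi> (inv\<^bsub>G\<^esub> s) (\<phi> s x) \<in> D" using inv invc s by blast
      then show "x \<in> D" using phinv s by simp
    qed
  qed
  have nG: "norm (\<gamma> Z) = norm Z" for Z
  proof -
    obtain b where "Z = \<Lambda> b (\<gamma> Z)" using Bx by blast
    then show ?thesis using li_norm[OF isoL[of b]] by metis
  qed
  have Li: "inner (\<Lambda> a u) (\<Lambda> a v) = inner u v" for u v using li_inner[OF isoL] .
  have Ln: "norm (\<Lambda> a u) = norm u" for u using li_norm[OF isoL] .
  have Ld: "\<Lambda> a u - \<Lambda> a v = \<Lambda> a (u - v)" for u v using li_diff[OF isoL] .
  show ?thesis
  proof (cases "x \<in> D")
    case False
    then show ?thesis using memb unfolding frechet_normal_cone_def by simp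
  next
    case True
    note xD = True
    show ?thesis
      unfolding fnc_iff[OF xD] fnc_iff[OF memb[THEN iffD1, OF xD]]
    proof
      assume H: "\<forall>e>0. \<exists>d>0. \<forall>z\<in>D. z \<noteq> x \<longrightarrow> norm (z - x) < d \<longrightarrow> inner (z - x) y \<le> e * norm (z - x)"
      show "\<forall>e>0. \<exists>d>0. \<forall>Z\<in>\<gamma> -` D. Z \<noteq> \<Lambda> a x \<longrightarrow> norm (Z - \<Lambda> a x) < d \<longrightarrow>
               inner (Z - \<Lambda> a x) (\<Lambda> a y) \<le> e * norm (Z - \<Lambda> a x)"
      proof (intro allI impI)
        fix e :: real assume e: "e > 0"
        obtain d where d: "d > 0" and dH: "\<And>z. z \<in> D \<Longrightarrow> z \<noteq> x \<Longrightarrow> norm (z - x) < d \<Longrightarrow> inner (z - x) y \<le> e * norm (z - x)"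
          using H e by blast
        define K where "K = norm y / e"
        have K0: "K \<ge> 0" unfolding K_def using e by simp
        have dH': "inner (z - x) y \<le> e * norm (z - x)" if "z \<in> D" "norm (z - x) < d" for z
        proof (cases "z = x")
          case True then show ?thesis by simp
        next
          case False then show ?thesis using dH[OF that(1) False that(2)] by simp
        qed
        show "\<exists>d'>0. \<forall>Z\<in>\<gamma> -` D. Z \<noteq> \<Lambda> a x \<longrightarrow> norm (Z - \<Lambda> a x) < d' \<longrightarrow>
               inner (Z - \<Lambda> a x) (\<Lambda> a y) \<le> e * norm (Z - \<Lambda> a x)"
        proof (intro exI[of _ "d / (2*K+1)"] conjI ballI impI)
          show "d / (2*K+1) > 0" using d K0 by simp
          fix Z assume ZD: "Z \<in> \<gamma> -` D" and ZX: "Z \<noteq> \<Lambda> a x" and Zd: "norm (Z - \<Lambda> a x) < d / (2*K+1)"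
          define X where "X = \<Lambda> a x"
          define dd where "dd = norm (Z - X)"
          have dd0: "dd > 0" using ZX unfolding dd_def X_def by simp
          define t where "t = dd / e"
          have t0: "t > 0" using dd0 e unfolding t_def by simp
          define w where "w = x + t *\<^sub>R y"
          obtain s where s: "s \<in> carrier G" "\<tau> w = \<phi> s w" using orb by blast
          define z' where "z' = \<phi> (inv\<^bsub>G\<^esub> s) (\<gamma> Z)"
          have z'D: "z' \<in> D" unfolding z'_def using ZD inv invc s by simp
          have isoI: "linear_isometry (\<phi> (inv\<^bsub>G\<^esub> s))" using isoP invc s by blast
          have "inner Z (\<Lambda> a w) \<le> inner (\<gamma> Z) (\<gamma> (\<Lambda> a w))" using Cx .
          also have "\<dots> = inner (\<gamma> Z) (\<phi> s w)" using gL s by simp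
          also have "\<dots> = inner z' w" unfolding z'_def
            using li_inner[OF isoI, of "\<gamma> Z" "\<phi> s w"] phinv[OF s(1)] by simp
          finally have I1: "inner Z (\<Lambda> a w) \<le> inner z' w" .
          have Lw: "\<Lambda> a w = X + t *\<^sub>R \<Lambda> a y" unfolding w_def X_def
            using isoL[of a] unfolding linear_isometry_def by (simp add: linear_add linear_scale)
          have nz': "norm z' = norm Z" unfolding z'_def using li_norm[OF isoI] nG by simp
          have nX: "norm X = norm x" unfolding X_def using Ln .
          have iXy: "inner X (\<Lambda> a y) = inner x y" unfolding X_def using Li .
          define r where "r = norm (z' - x)"
          define A where "A = inner (Z - X) (\<Lambda> a y)"
          define B where "B = inner (z' - x) y"
          have dd2: "dd^2 = (norm Z)^2 - 2 * inner Z X + (norm X)^2"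
            unfolding dd_def by (simp add: power2_norm_eq_inner inner_diff_left inner_diff_right inner_commute)
          have r2: "r^2 = (norm z')^2 - 2 * inner z' x + (norm x)^2"
            unfolding r_def by (simp add: power2_norm_eq_inner inner_diff_left inner_diff_right inner_commute)
          have E1: "inner Z X + t * inner Z (\<Lambda> a y) \<le> inner z' x + t * inner z' y"
          proof -
            have "inner Z (\<Lambda> a w) = inner Z X + t * inner Z (\<Lambda> a y)"
              by (simp only: Lw inner_add_right inner_scaleR_right)
            moreover have "inner z' w = inner z' x + t * inner z' y"
              by (simp only: w_def inner_add_right inner_scaleR_right)
            ultimately show ?thesis using I1 by linarith
          qed
          have tA: "t * A = t * inner Z (\<Lambda> a y) - t * inner x y"
            by (simp only: A_def inner_diff_left iXy right_diff_distrib)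
          have tB: "t * B = t * inner z' y - t * inner x y"
            by (simp only: B_def inner_diff_left right_diff_distrib)
          have key: "t * A \<le> (dd^2 - r^2)/2 + t * B"
          proof -
            have r2': "r^2 = (norm Z)^2 - 2 * inner z' x + (norm X)^2" using r2 nz' nX by simp
            show ?thesis using E1 tA tB dd2 r2' by (simp add: field_simps)
          qed
          have Ab: "\<bar>A\<bar> \<le> norm y * dd" unfolding A_def dd_def
            using Cauchy_Schwarz_ineq2[of "Z - X" "\<Lambda> a y"] Ln by (simp add: mult.commute)
          have Bb: "\<bar>B\<bar> \<le> norm y * r" unfolding B_def r_def
            using Cauchy_Schwarz_ineq2[of "z' - x" y] by (simp add: mult.commute)
          have tK: "t * norm y = K * dd" unfolding t_def K_def by simp
          have rb: "r \<le> (2*K+1) * dd"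
          proof (rule ccontr)
            assume "\<not> ?thesis"
            then have "r - (2*K+1)*dd > 0" by simp
            moreover have "r + dd > 0" using dd0 norm_ge_zero[of "z' - x"] unfolding r_def by linarith
            ultimately have P: "(r - (2*K+1)*dd) * (r + dd) > 0" by simp
            have P2: "(r - (2*K+1)*dd) * (r + dd) = r^2 - 2 * (K * dd) * r - 2 * (K * dd) * dd - dd^2"
              by (simp add: algebra_simps power2_eq_square)
            have Q1: "r^2 \<le> dd^2 + 2 * (t * B) - 2 * (t * A)" using key by (simp add: field_simps)
            have "t * B \<le> t * (norm y * r)" using Bb t0 by (intro mult_left_mono) auto
            moreover have "- (t * A) \<le> t * (norm y * dd)"
            proof -
              have "- A \<le> norm y * dd" using Ab by linarith
              then have "t * (- A) \<le> t * (norm y * dd)" using t0 by (intro mult_left_mono) auto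
              then show ?thesis by simp
            qed
            ultimately have "t * B - t * A \<le> (t * norm y) * r + (t * norm y) * dd"
              by (simp add: mult.assoc)
            then have "t * B - t * A \<le> (K * dd) * r + (K * dd) * dd" using tK by simp
            then show False using P P2 Q1 by linarith
          qed
          have "r < d"
          proof -
            have "(2*K+1) * dd < d" using Zd K0 unfolding dd_def X_def by (simp add: field_simps)
            then show ?thesis using rb by simp
          qed
          then have "B \<le> e * r" using dH'[OF z'D] unfolding B_def r_def by simp
          moreover have "t * B \<le> t * (e * r)" using \<open>B \<le> e * r\<close> t0 by (intro mult_left_mono) auto
          moreover have "t * (e * r) = t * e * r" by simp
          ultimately have "t * A \<le> (dd^2 - r^2)/2 + t * e * r" using key by linarith
          also have "\<dots> \<le> dd^2"
          proof -
            have "t * e = dd" unfolding t_def using e by simp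
            then have "(dd^2 - r^2)/2 + t * e * r = dd^2 - (dd - r)^2 / 2"
              by (simp add: power2_eq_square field_simps)
            moreover have "(dd - r)^2 \<ge> 0" by simp
            ultimately show ?thesis by linarith
          qed
          finally have "t * A \<le> dd^2" .
          then have "A \<le> dd^2 / t" using t0 by (simp add: pos_le_divide_eq mult.commute)
          also have "dd^2 / t = e * dd" unfolding t_def using dd0 e by (simp add: power2_eq_square field_simps)
          finally show "inner (Z - \<Lambda> a x) (\<Lambda> a y) \<le> e * norm (Z - \<Lambda> a x)"
            unfolding A_def dd_def X_def .
        qed
      qed
    next
      assume H: "\<forall>e>0. \<exists>d>0. \<forall>Z\<in>\<gamma> -` D. Z \<noteq> \<Lambda> a x \<longrightarrow> norm (Z - \<Lambda> a x) < d \<longrightarrow>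
               inner (Z - \<Lambda> a x) (\<Lambda> a y) \<le> e * norm (Z - \<Lambda> a x)"
      show "\<forall>e>0. \<exists>d>0. \<forall>z\<in>D. z \<noteq> x \<longrightarrow> norm (z - x) < d \<longrightarrow> inner (z - x) y \<le> e * norm (z - x)"
      proof (intro allI impI)
        fix e :: real assume e: "e > 0"
        obtain d where d: "d > 0" and dH: "\<And>Z. Z \<in> \<gamma> -` D \<Longrightarrow> Z \<noteq> \<Lambda> a x \<Longrightarrow> norm (Z - \<Lambda> a x) < d \<Longrightarrow>
               inner (Z - \<Lambda> a x) (\<Lambda> a y) \<le> e * norm (Z - \<Lambda> a x)"
          using H e by blast
        show "\<exists>d>0. \<forall>z\<in>D. z \<noteq> x \<longrightarrow> norm (z - x) < d \<longrightarrow> inner (z - x) y \<le> e * norm (z - x)"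
        proof (intro exI[of _ d] conjI ballI impI)
          show "d > 0" using d .
          fix z assume zD: "z \<in> D" and zx: "z \<noteq> x" and zd: "norm (z - x) < d"
          have m: "\<Lambda> a z \<in> \<gamma> -` D"
          proof -
            obtain s where s: "s \<in> carrier G" "\<tau> z = \<phi> s z" using orb by blast
            then show ?thesis using gL inv zD by simp
          qed
          have ne: "\<Lambda> a z \<noteq> \<Lambda> a x"
          proof
            assume "\<Lambda> a z = \<Lambda> a x"
            then have "\<Lambda> a (z - x) = 0" using Ld[of z x] by simp
            then have "norm (z - x) = 0" using Ln[of "z - x"] by simp
            then show False using zx by simp
          qed
          have "inner (\<Lambda> a z - \<Lambda> a x) (\<Lambda> a y) \<le> e * norm (\<Lambda> a z - \<Lambda> a x)"
            using dH[OF m ne] zd Ld[of z x] Ln[of "z - x"] by simp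
          then show "inner (z - x) y \<le> e * norm (z - x)" using Ld[of z x] Ln[of "z - x"] Li[of "z - x" y] by simp
        qed
      qed
    qed
  qed
qed

end
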